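(* Let $H\leq F_2$ and fix $y\in F_2$. For any $xH\in F_2/H$ and all $i\geq 1$, we have $|E_i(xH)|=|\Omega_{i,xH}|$.
   Context: $F_2$ is the free group on $a,b$ and $\Xi=\{a,b,a^{-1},b^{-1}\}$. The directed coset graph of $F_2/H$ has vertex set $F_2/H$ and, for each vertex $rH$ and each $h\in\Xi$, one directed edge from $rH$ to $hrH$ (so loops and parallel edges may occur); two vertices are adjacent if there is an edge between them. Sets $\Omega_{k,xH}\subseteq\Xi$ for $k\geq -1$, $xH\in F_2/H$ are defined recursively: $\Omega_{-1,xH}=\varnothing$ for all $xH$; $\Omega_{0,yH}=\Xi$ and $\Omega_{0,xH}=\varnothing$ for $xH\neq yH$; and for $k\geq 0$, $\Omega_{k+1,zH}=\{h\in\Xi:\Omega_{k-1,zH}=\varnothing\text{ and }\Omega_{k,h^{-1}zH}\neq\varnothing\}$. Sets $E_i$ of directed edges are defined recursively: $E_1$ is the set of all directed edges whose source is $yH$; $E_{i+1}$ is the set of all directed edges $tH\to sH$ such that no directed edge from $sH$ to $tH$ belongs to $E_i$ and there exists a vertex $rH$ with a directed edge $rH\to tH$ in $E_i$. $E_i(xH)$ denotes the set of edges in $E_i$ whose target is $xH$. *)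

theory Defs
  imports "HOL-Algebra.Coset"
begin

datatype gen = GA | GB

text \<open>A letter (g, False) is the generator g, (g, True) is its inverse.
  The alphabet Xi = {a, b, a^-1, b^-1} is the whole type of letters.\<close>
type_synonym letter = "gen \<times> bool"

definition Xi :: "letter set" where "Xi = UNIV"

definition inv_letter :: "letter \<Rightarrow> letter" where
  "inv_letter l = (fst l, \<not> snd l)"

fun cancel_cons :: "letter \<Rightarrow> letter list \<Rightarrow> letter list" where
  "cancel_cons l [] = [l]"
| "cancel_cons l (m # ms) = (if m = inv_letter l then ms else l # m # ms)"

definition reduce :: "letter list \<Rightarrow> letter list" where
  "reduce w = foldr cancel_cons w []"

fun reduced :: "letter list \<Rightarrow> bool" where
  "reduced [] = True"
| "reduced [l] = True"
| "reduced (l # m # ms) = (m \<noteq> inv_letter l \<and> reduced (m # ms))"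

definition F2 :: "letter list monoid" where
  "F2 = \<lparr> carrier = {w. reduced w}, mult = (\<lambda>u v. reduce (u @ v)), one = [] \<rparr>"

definition elt :: "letter \<Rightarrow> letter list" where "elt h = [h]"

definition cosets :: "letter list set \<Rightarrow> letter list set set" where
  "cosets H = (\<lambda>r. r <#\<^bsub>F2\<^esub> H) ` carrier F2"

type_synonym edge = "letter list set \<times> letter"

definition src :: "edge \<Rightarrow> letter list set" where "src e = fst e"

definition tgt :: "edge \<Rightarrow> letter list set" where
  "tgt e = elt (snd e) <#\<^bsub>F2\<^esub> fst e"

definition edges :: "letter list set \<Rightarrow> edge set" where
  "edges H = cosets H \<times> Xi"

text \<open>Om n C stands for Omega_{n-1,C}; index shifted by one so that it lives on nat.\<close>
fun Om :: "letter list set \<Rightarrow> letter list \<Rightarrow> nat \<Rightarrow> letter list set \<Rightarrow> letter set" where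
  "Om H y 0 C = {}"
| "Om H y (Suc 0) C = (if C = y <#\<^bsub>F2\<^esub> H then Xi else {})"
| "Om H y (Suc (Suc k)) C =
     {h \<in> Xi. Om H y k C = {} \<and> Om H y (Suc k) (elt (inv_letter h) <#\<^bsub>F2\<^esub> C) \<noteq> {}}"

definition Omega :: "letter list set \<Rightarrow> letter list \<Rightarrow> int \<Rightarrow> letter list set \<Rightarrow> letter set" where
  "Omega H y k C = Om H y (nat (k + 1)) C"

text \<open>Eseq n = E_{n+1}.\<close>
fun Eseq :: "letter list set \<Rightarrow> letter list \<Rightarrow> nat \<Rightarrow> edge set" where
  "Eseq H y 0 = {e \<in> edges H. src e = y <#\<^bsub>F2\<^esub> H}"
| "Eseq H y (Suc n) =
     {e \<in> edges H.
        \<not> (\<exists>e' \<in> Eseq H y n. src e' = tgt e \<and> tgt e' = src e) \<and>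
        (\<exists>e'' \<in> Eseq H y n. tgt e'' = src e)}"

definition E :: "letter list set \<Rightarrow> letter list \<Rightarrow> nat \<Rightarrow> edge set" where
  "E H y i = Eseq H y (i - 1)"

definition E_at :: "letter list set \<Rightarrow> letter list \<Rightarrow> nat \<Rightarrow> letter list set \<Rightarrow> edge set" where
  "E_at H y i C = {e \<in> E H y i. tgt e = C}"

end

theory Submission
  imports Defs
begin

lemma inv_inv_letter[simp]: "inv_letter (inv_letter l) = l"
  by (simp add: inv_letter_def)

lemma inv_letter_neq[simp]: "inv_letter l \<noteq> l"
  by (cases l) (simp add: inv_letter_def)

lemma reduced_tl: "reduced (m # ms) \<Longrightarrow> reduced ms"
  by (cases ms) auto

lemma reduced_cancel_cons: "reduced w \<Longrightarrow> reduced (cancel_cons l w)"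
  by (cases w) (auto intro: reduced_tl)

lemma reduced_foldr: "reduced z \<Longrightarrow> reduced (foldr cancel_cons a z)"
  by (induction a) (auto intro: reduced_cancel_cons)

lemma reduced_reduce: "reduced (reduce a)"
  unfolding reduce_def by (rule reduced_foldr) simp

lemma cancel_inv: "reduced w \<Longrightarrow> cancel_cons (inv_letter l) (cancel_cons l w) = w"
proof (cases w)
  case Nil then show ?thesis by simp
next
  case (Cons m ms)
  assume r: "reduced w"
  show ?thesis
  proof (cases "m = inv_letter l")
    case True
    then show ?thesis using Cons r by (cases ms) auto
  next
    case False
    then show ?thesis using Cons by simp
  qed
qed

lemma cancel_inv2: "reduced w \<Longrightarrow> cancel_cons l (cancel_cons (inv_letter l) w) = w"
  using cancel_inv[of w "inv_letter l"] by simp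

lemma reduce_reduced: "reduced w \<Longrightarrow> reduce w = w"
proof (induction w)
  case Nil then show ?case by (simp add: reduce_def)
next
  case (Cons l w)
  have "reduce (l # w) = cancel_cons l (reduce w)" by (simp add: reduce_def)
  also have "\<dots> = cancel_cons l w" using Cons reduced_tl by metis
  also have "\<dots> = l # w" using Cons.prems by (cases w) auto
  finally show ?case .
qed

lemma foldr_cancel_cons_step:
  assumes "reduced v" "reduced z"
  shows "foldr cancel_cons (cancel_cons l v) z = cancel_cons l (foldr cancel_cons v z)"
proof (cases v)
  case Nil then show ?thesis by simp
next
  case (Cons m vs)
  show ?thesis
  proof (cases "m = inv_letter l")
    case True
    have "reduced (foldr cancel_cons vs z)" using assms reduced_foldr by blast
    then show ?thesis using Cons True by (simp add: cancel_inv2)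
  next
    case False then show ?thesis using Cons by simp
  qed
qed

lemma foldr_reduce: "reduced z \<Longrightarrow> foldr cancel_cons (reduce a) z = foldr cancel_cons a z"
proof (induction a)
  case Nil then show ?case by (simp add: reduce_def)
next
  case (Cons l a)
  have "reduce (l # a) = cancel_cons l (reduce a)" by (simp add: reduce_def)
  then have "foldr cancel_cons (reduce (l # a)) z = cancel_cons l (foldr cancel_cons (reduce a) z)"
    using foldr_cancel_cons_step[OF reduced_reduce Cons.prems] by simp
  then show ?case using Cons by simp
qed

lemma reduce_append: "reduce (a @ b) = foldr cancel_cons a (reduce b)"
  by (simp add: reduce_def)

lemma reduce_left: "reduce (reduce a @ b) = reduce (a @ b)"
  by (simp add: reduce_append foldr_reduce reduced_reduce)

lemma reduce_right: "reduce (a @ reduce b) = reduce (a @ b)"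
  by (simp add: reduce_append reduce_reduced reduced_reduce)

lemma reduce_Cons: "reduce (h # w) = cancel_cons h (reduce w)"
  by (simp add: reduce_def)

definition Lc :: "letter \<Rightarrow> letter list set \<Rightarrow> letter list set" where
  "Lc h C = elt h <#\<^bsub>F2\<^esub> C"

lemma Lc_eq: "Lc h C = (\<lambda>w. reduce ([h] @ w)) ` C"
  unfolding Lc_def l_coset_def F2_def elt_def by auto

lemma coset_eq: "r <#\<^bsub>F2\<^esub> H = (\<lambda>u. reduce (r @ u)) ` H"
  unfolding l_coset_def F2_def by auto

lemma coset_reduced: "C \<in> cosets H \<Longrightarrow> w \<in> C \<Longrightarrow> reduced w"
  unfolding cosets_def coset_eq by (auto simp: reduced_reduce)

lemma Lc_inv: assumes "\<And>w. w \<in> C \<Longrightarrow> reduced w"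
  shows "Lc (inv_letter h) (Lc h C) = C"
proof -
  have "\<And>w. w \<in> C \<Longrightarrow> reduce ([inv_letter h] @ reduce ([h] @ w)) = w"
    using assms by (simp add: reduce_Cons reduce_reduced cancel_inv reduced_cancel_cons)
  then show ?thesis unfolding Lc_eq image_image by simp
qed

lemma Lc_inv_cos: "C \<in> cosets H \<Longrightarrow> Lc (inv_letter h) (Lc h C) = C"
  by (rule Lc_inv) (rule coset_reduced)

lemma Lc_inv_cos2: "C \<in> cosets H \<Longrightarrow> Lc h (Lc (inv_letter h) C) = C"
  using Lc_inv_cos[of C H "inv_letter h"] by simp

lemma Lc_cos: assumes "C \<in> cosets H" shows "Lc h C \<in> cosets H"
proof -
  obtain r where r: "r \<in> carrier F2" "C = r <#\<^bsub>F2\<^esub> H"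
    using assms unfolding cosets_def by auto
  have "Lc h C = reduce ([h] @ r) <#\<^bsub>F2\<^esub> H"
    unfolding Lc_eq r coset_eq image_image
    using reduce_right[of "[h]"] reduce_left[of "[h] @ r"] by simp
  moreover have "reduce ([h] @ r) \<in> carrier F2" by (simp add: F2_def reduced_reduce)
  ultimately show ?thesis unfolding cosets_def by blast
qed


lemma Om_SS: "Om H y (Suc (Suc k)) C =
   {h. Om H y k C = {} \<and> Om H y (Suc k) (Lc (inv_letter h) C) \<noteq> {}}"
  by (simp add: Lc_def Xi_def)

lemma tgt_Lc: "tgt e = Lc (snd e) (fst e)"
  by (simp add: tgt_def Lc_def)

lemma Eseq_char:
  "(D, h) \<in> Eseq H y n \<longleftrightarrow>
     D \<in> cosets H \<and> Om H y (Suc n) D \<noteq> {} \<and> Om H y n (Lc h D) = {}"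
proof (induction n arbitrary: D h)
  case 0
  show ?case by (auto simp: edges_def src_def Xi_def)
next
  case (Suc n)
  show ?case
  proof (cases "D \<in> cosets H")
    case False
    then show ?thesis by (auto simp: edges_def)
  next
    case D: True
    have A: "(\<exists>e' \<in> Eseq H y n. src e' = tgt (D, h) \<and> tgt e' = src (D, h))
        \<longleftrightarrow> Om H y (Suc n) (Lc h D) \<noteq> {} \<and> Om H y n D = {}"
    proof
      assume "\<exists>e' \<in> Eseq H y n. src e' = tgt (D, h) \<and> tgt e' = src (D, h)"
      then obtain D' g where e: "(D', g) \<in> Eseq H y n" "D' = Lc h D" "Lc g D' = D"
        by (auto simp: src_def tgt_Lc)
      then show "Om H y (Suc n) (Lc h D) \<noteq> {} \<and> Om H y n D = {}"
        using Suc.IH by auto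
    next
      assume a: "Om H y (Suc n) (Lc h D) \<noteq> {} \<and> Om H y n D = {}"
      have "(Lc h D, inv_letter h) \<in> Eseq H y n"
        using Suc.IH a Lc_cos[OF D] Lc_inv_cos[OF D] by simp
      moreover have "tgt (Lc h D, inv_letter h) = D" using Lc_inv_cos[OF D] by (simp add: tgt_Lc)
      ultimately show "\<exists>e' \<in> Eseq H y n. src e' = tgt (D, h) \<and> tgt e' = src (D, h)"
        by (intro bexI[where x="(Lc h D, inv_letter h)"]) (auto simp: src_def tgt_Lc)
    qed
    have B: "(\<exists>e'' \<in> Eseq H y n. tgt e'' = src (D, h))
        \<longleftrightarrow> (\<exists>g. Om H y (Suc n) (Lc (inv_letter g) D) \<noteq> {}) \<and> Om H y n D = {}"
    proof
      assume "\<exists>e'' \<in> Eseq H y n. tgt e'' = src (D, h)"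
      then obtain D' g where e: "(D', g) \<in> Eseq H y n" "Lc g D' = D"
        by (auto simp: src_def tgt_Lc)
      then have "D' \<in> cosets H" using Suc.IH[of D' g] by simp
      then have D': "D' = Lc (inv_letter g) D" using e Lc_inv_cos by metis
      have o: "Om H y (Suc n) D' \<noteq> {}" "Om H y n (Lc g D') = {}"
        using e(1) Suc.IH[of D' g] by simp_all
      have "Om H y (Suc n) (Lc (inv_letter g) D) \<noteq> {}" using o(1) D' by simp
      moreover have "Om H y n D = {}" using o(2) e(2) by simp
      ultimately show "(\<exists>g. Om H y (Suc n) (Lc (inv_letter g) D) \<noteq> {}) \<and> Om H y n D = {}"
        by blast
    next
      assume a: "(\<exists>g. Om H y (Suc n) (Lc (inv_letter g) D) \<noteq> {}) \<and> Om H y n D = {}"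
      then obtain g where g: "Om H y (Suc n) (Lc (inv_letter g) D) \<noteq> {}" by blast
      have "(Lc (inv_letter g) D, g) \<in> Eseq H y n"
        using Suc.IH a g Lc_cos[OF D] Lc_inv_cos2[OF D] by simp
      moreover have "tgt (Lc (inv_letter g) D, g) = D" using Lc_inv_cos2[OF D] by (simp add: tgt_Lc)
      ultimately show "\<exists>e'' \<in> Eseq H y n. tgt e'' = src (D, h)"
        by (intro bexI[where x="(Lc (inv_letter g) D, g)"]) (auto simp: src_def tgt_Lc)
    qed
    have "(D, h) \<in> Eseq H y (Suc n) \<longleftrightarrow>
       \<not> (\<exists>e' \<in> Eseq H y n. src e' = tgt (D, h) \<and> tgt e' = src (D, h)) \<and>
        (\<exists>e'' \<in> Eseq H y n. tgt e'' = src (D, h))"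
      using D by (simp add: edges_def Xi_def)
    also have "\<dots> \<longleftrightarrow> D \<in> cosets H \<and> Om H y (Suc (Suc n)) D \<noteq> {} \<and> Om H y (Suc n) (Lc h D) = {}"
      unfolding A B Om_SS using D by auto
    finally show ?thesis .
  qed
qed

theorem lemma4p1:
  fixes H :: "letter list set" and x y :: "letter list" and i :: nat
  assumes "subgroup H F2"
    and "y \<in> carrier F2"
    and "x \<in> carrier F2"
    and "i \<ge> 1"
  shows "card (E_at H y i (x <#\<^bsub>F2\<^esub> H)) = card (Omega H y (int i) (x <#\<^bsub>F2\<^esub> H))"
proof -
  define C where "C = x <#\<^bsub>F2\<^esub> H"
  define n where "n = i - 1"
  have C: "C \<in> cosets H" using assms(3) unfolding C_def cosets_def by blast
  have Om_eq: "Omega H y (int i) C = Om H y (Suc (Suc n)) C"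
    using assms(4) by (simp add: Omega_def n_def nat_add_distrib)
  have E_eq: "E_at H y i C = (\<lambda>h. (Lc (inv_letter h) C, h)) ` Om H y (Suc (Suc n)) C"
  proof (rule Set.set_eqI)
    fix e :: edge
    obtain D h where e: "e = (D, h)" by (cases e)
    show "e \<in> E_at H y i C \<longleftrightarrow> e \<in> (\<lambda>h. (Lc (inv_letter h) C, h)) ` Om H y (Suc (Suc n)) C"
    proof
      assume "e \<in> E_at H y i C"
      then have m: "(D, h) \<in> Eseq H y n" "Lc h D = C"
        by (auto simp: E_at_def E_def n_def e tgt_Lc)
      then have D: "D \<in> cosets H" using Eseq_char by blast
      then have DC: "D = Lc (inv_letter h) C" using m Lc_inv_cos by metis
      have o: "Om H y (Suc n) D \<noteq> {}" "Om H y n (Lc h D) = {}"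
        using m(1) Eseq_char[of D h H y n] by blast+
      have "h \<in> Om H y (Suc (Suc n)) C" unfolding Om_SS using o m(2) DC by simp
      then show "e \<in> (\<lambda>h. (Lc (inv_letter h) C, h)) ` Om H y (Suc (Suc n)) C"
        unfolding e DC by (rule imageI)
    next
      assume "e \<in> (\<lambda>h. (Lc (inv_letter h) C, h)) ` Om H y (Suc (Suc n)) C"
      then have m: "D = Lc (inv_letter h) C" "h \<in> Om H y (Suc (Suc n)) C" by (auto simp: e)
      have LC: "Lc h D = C" using m Lc_inv_cos2[OF C] by simp
      have o: "Om H y n C = {}" "Om H y (Suc n) D \<noteq> {}" using m unfolding Om_SS by blast+
      have "(D, h) \<in> Eseq H y n"
        using Eseq_char[of D h H y n] o LC Lc_cos[OF C] m(1) by simp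
      moreover note LC
      ultimately show "e \<in> E_at H y i C"
        by (auto simp: E_at_def E_def n_def e tgt_Lc)
    qed
  qed
  have "card (E_at H y i C) = card (Om H y (Suc (Suc n)) C)"
    unfolding E_eq by (rule card_image) (auto simp: inj_on_def)
  then show ?thesis using Om_eq C_def by simp
qed

end
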